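(* (Perfect soundness.) Consider the card-based Makaro protocol described in the context. If the prover $P$ does not know a solution of the Makaro puzzle (so that the numbers encoded by the cell cards $P$ places violate at least one of the room, neighbor or arrow conditions), then the verifier $V$ always rejects.
   Context: Makaro puzzle: a rectangular grid of white and black cells. The white cells are partitioned into polyominoes called rooms; the size of a room is its number of cells. Some white cells already contain a number. Each black cell contains an arrow pointing to one of its (horizontally or vertically) adjacent white cells. A solution assigns a number to every empty white cell such that: (room condition) each room of size $p$ contains exactly the numbers $1,2,\dots,p$; (neighbor condition) two orthogonally adjacent white cells in different rooms contain different numbers; (arrow condition) for each black cell, the white cell its arrow points to contains the unique largest number among the (up to four) numbers in the white cells orthogonally adjacent to that black cell. Let $k$ be the size of the largest room. Cards: all cards have distinct front faces and identical backs. For each room $R$ of size $p$ there are cell cards $R_1,\dots,R_p$ (cards of different rooms are all distinct); there are helping cards $h_1,\dots,h_k$ and encoding cards $a_i,b_i,c_i,d_i$ for $i=1,\dots,2k-1$. A pile-scramble shuffle applied to a matrix of face-down cards permutes its columns by a uniformly random permutation unknown to all parties; a pile-shifting shuffle permutes the columns by a uniformly random cyclic shift unknown to all parties. Protocol. Setup: on each white cell of room $R$ containing (or, for empty cells, secretly assigned by $P$) the number $v$, $P$ places the face-down card $R_v$ (publicly for prefilled cells, secretly for the others). Room check, for each room $R$ of size $p$: put its cell cards in a fixed order in Row 1 of a $2\times p$ matrix and $h_1,\dots,h_p$ in Row 2; pile-scramble; reveal Row 1 and reject unless it is a permutation of $R_1,\dots,R_p$; turn these cards face down, pile-scramble again,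 reveal Row 2, rearrange the columns so Row 2 reads $h_1,\dots,h_p$, and return the Row 1 cards to their cells. Conversion (cell with card $R_x$ in room $R$ of size $p$, target length $m\ge p$, card set $X\in\{a,b,c,d\}$): put the cell cards of $R$ in a fixed order in Row 1 of a matrix, with $R_x$ in column $i$; $h_1,\dots,h_p$ in Row 2; $X_1$ in Row 3, column $i$; $P$ secretly forms a uniformly random permutation $S$ of $X_2,\dots,X_m$ and fills the remaining $p-1$ cells of Row 3 from left to right with the first $p-1$ cards of $S$. Pile-scramble the $3\times p$ matrix; reveal Row 1 and rearrange columns so Row 1 reads $R_1,\dots,R_p$; remove Row 3 as a sequence $T$ and append the remaining $m-p$ cards of $S$ to obtain a face-down sequence of length $m$ (the encoding sequence). Then turn Row 1 face down, pile-scramble, reveal Row 2, rearrange so it reads $h_1,\dots,h_p$, and return the cell cards to their cells. Neighbor check, for each pair of adjacent white cells in different rooms (room sizes $p,q$, $m=\max(p,q)$): convert the first cell with set $a$ and the second with set $b$, both with length $m$; place the two sequences as Rows 1 and 2 of a $2\times m$ matrix; pile-scramble; reveal Row 1; let $a_1$ be in column $i$; reveal the Row 2 card in column $i$ and reject if it is $b_1$. Arrow check, for each black cell: let the pointed-to cell and the other (up to three) adjacent white cells be considered, and let $m$ be the maximum room size among them; convert the pointed-to cell with set $a$ and the others with sets $b,c,d$, all with length $2m-1$; place them as rows of a matrix (Row 1 from set $a$); apply a pile-shifting shuffle; reveal Row 1, let $a_1$ be in column $i$; reveal the cards of the other rows in columns $i,i+1,\dots,i+m-1$ (indices modulo $2m-1$)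 and reject if any of them is $b_1$, $c_1$ or $d_1$. $V$ accepts if no check rejects. *)

theory Defs
  imports Main "HOL-Library.Multiset"
begin

type_synonym cell = "nat \<times> nat"

text \<open>Cells are pairs (row, column).
  The rooms are given as lists of cells; the order of a room list is the
  "fixed order" of its cells used by the protocol.  pre c = Some v means
  cell c is prefilled with v; arr b is the white cell the arrow of the
  black cell b points to.\<close>

record puzzle =
  ph :: nat
  pw :: nat
  white :: "cell set"
  rooms :: "cell list list"
  pre :: "cell \<Rightarrow> nat option"
  arr :: "cell \<Rightarrow> cell"

definition grid :: "puzzle \<Rightarrow> cell set" where
  "grid P = {(i, j). i < ph P \<and> j < pw P}"

definition black :: "puzzle \<Rightarrow> cell set" where
  "black P = grid P - white P"

definition adj :: "cell \<Rightarrow> cell \<Rightarrow> bool" where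
  "adj c d \<longleftrightarrow> (fst c = fst d \<and> (snd d = snd c + 1 \<or> snd c = snd d + 1))
             \<or> (snd c = snd d \<and> (fst d = fst c + 1 \<or> fst c = fst d + 1))"

definition room_connected :: "cell list \<Rightarrow> bool" where
  "room_connected cs \<longleftrightarrow>
     (\<forall>c\<in>set cs. \<forall>d\<in>set cs. (\<lambda>x y. x \<in> set cs \<and> y \<in> set cs \<and> adj x y)\<^sup>*\<^sup>* c d)"

definition roomidx :: "puzzle \<Rightarrow> cell \<Rightarrow> nat" where
  "roomidx P c = (THE r. r < length (rooms P) \<and> c \<in> set (rooms P ! r))"

definition rsize :: "puzzle \<Rightarrow> cell \<Rightarrow> nat" where
  "rsize P c = length (rooms P ! roomidx P c)"

definition pos :: "puzzle \<Rightarrow> cell \<Rightarrow> nat" where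
  "pos P c = (THE i. i < rsize P c \<and> rooms P ! roomidx P c ! i = c)"

definition wf_puzzle :: "puzzle \<Rightarrow> bool" where
  "wf_puzzle P \<longleftrightarrow>
     white P \<subseteq> grid P
   \<and> (\<forall>r < length (rooms P). rooms P ! r \<noteq> [] \<and> distinct (rooms P ! r)
                             \<and> room_connected (rooms P ! r))
   \<and> (\<forall>r < length (rooms P). \<forall>s < length (rooms P). r \<noteq> s \<longrightarrow>
          set (rooms P ! r) \<inter> set (rooms P ! s) = {})
   \<and> (\<Union>r < length (rooms P). set (rooms P ! r)) = white P
   \<and> (\<forall>c v. pre P c = Some v \<longrightarrow> c \<in> white P \<and> 1 \<le> v \<and> v \<le> rsize P c)
   \<and> (\<forall>b \<in> black P. arr P b \<in> white P \<and> adj b (arr P b))"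

definition is_solution :: "puzzle \<Rightarrow> (cell \<Rightarrow> nat) \<Rightarrow> bool" where
  "is_solution P x \<longleftrightarrow>
     (\<forall>c v. pre P c = Some v \<longrightarrow> x c = v)
   \<and> (\<forall>r < length (rooms P). x ` set (rooms P ! r) = {1..length (rooms P ! r)})
   \<and> (\<forall>c\<in>white P. \<forall>d\<in>white P. adj c d \<and> roomidx P c \<noteq> roomidx P d \<longrightarrow> x c \<noteq> x d)
   \<and> (\<forall>b\<in>black P. \<forall>c\<in>white P. adj b c \<and> c \<noteq> arr P b \<longrightarrow> x c < x (arr P b))"

text \<open>Cell r v is the cell card R_v of room number r; Hc i is h_i;
  Ac i, Bc i, Cc i, Dc i are a_i, b_i, c_i, d_i.\<close>
datatype card = Cell nat nat | Hc nat | Ac nat | Bc nat | Cc nat | Dc nat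

text \<open>A matrix of cards is a list of columns (each column a list of cards,
  from Row 1 downwards).  A pile-scramble shuffle with outcome pi (a
  permutation of the column indices) and a pile-shifting shuffle with
  outcome r (a cyclic shift):\<close>
definition is_perm :: "nat list \<Rightarrow> nat \<Rightarrow> bool" where
  "is_perm \<pi> n \<longleftrightarrow> distinct \<pi> \<and> set \<pi> = {..<n}"

definition permute_cols :: "nat list \<Rightarrow> card list list \<Rightarrow> card list list" where
  "permute_cols \<pi> M = map (\<lambda>i. M ! i) \<pi>"

definition shift_cols :: "nat \<Rightarrow> card list list \<Rightarrow> card list list" where
  "shift_cols r M = rotate r M"

text \<open>The placement pl gives the (face-down) card lying on each white cell.\<close>
definition placement_ok :: "puzzle \<Rightarrow> (cell \<Rightarrow> card) \<Rightarrow> bool" where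
  "placement_ok P pl \<longleftrightarrow> (\<forall>c v. pre P c = Some v \<longrightarrow> pl c = Cell (roomidx P c) v)"

text \<open>Room check for room number r, first pile-scramble outcome pi:
  rejects unless the revealed Row 1 is a permutation of R_1..R_p.
  (The remaining steps only return the cell cards to their cells.)\<close>
definition room_reject :: "puzzle \<Rightarrow> (cell \<Rightarrow> card) \<Rightarrow> nat \<Rightarrow> nat list \<Rightarrow> bool" where
  "room_reject P pl r \<pi> =
    (let cs = rooms P ! r; p = length cs;
         cols = map (\<lambda>j. [pl (cs ! j), Hc (j + 1)]) [0..<p];
         sc = permute_cols \<pi> cols;
         row1 = map (\<lambda>col. col ! 0) sc
     in mset row1 \<noteq> mset (map (Cell r) [1..<p + 1]))"

text \<open>Valid secret sequence S of the prover: a permutation of X_2..X_m.\<close>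
definition valid_S :: "(nat \<Rightarrow> card) \<Rightarrow> nat \<Rightarrow> card list \<Rightarrow> bool" where
  "valid_S X m S \<longleftrightarrow> mset S = mset (map X [2..<m + 1])"

text \<open>Conversion of the card on cell c to an encoding sequence of length m
  with card set X, secret sequence S and pile-scramble outcome pi.\<close>
definition conv :: "puzzle \<Rightarrow> (cell \<Rightarrow> card) \<Rightarrow> cell \<Rightarrow> (nat \<Rightarrow> card) \<Rightarrow> nat
                     \<Rightarrow> card list \<Rightarrow> nat list \<Rightarrow> card list" where
  "conv P pl c X m S \<pi> =
    (let r = roomidx P c; cs = rooms P ! r; p = length cs; i = pos P c;
         row3 = map (\<lambda>j. if j = i then X 1 else S ! (if j < i then j else j - 1)) [0..<p];
         cols = map (\<lambda>j. [pl (cs ! j), Hc (j + 1), row3 ! j]) [0..<p];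
         sc = permute_cols \<pi> cols;
         rearr = map (\<lambda>v. sc ! (LEAST j. j < length sc \<and> sc ! j ! 0 = Cell r v)) [1..<p + 1];
         T = map (\<lambda>col. col ! 2) rearr
     in T @ drop (p - 1) S)"

definition npairs :: "puzzle \<Rightarrow> (cell \<times> cell) set" where
  "npairs P = {(c, d). c \<in> white P \<and> d \<in> white P
       \<and> ((fst d = fst c \<and> snd d = snd c + 1) \<or> (fst d = fst c + 1 \<and> snd d = snd c))
       \<and> roomidx P c \<noteq> roomidx P d}"

text \<open>Neighbor check: S1,S2 and pi1,pi2 are the secret sequences and
  scramble outcomes of the two conversions, rho the outcome of the final
  pile-scramble shuffle.\<close>
definition neighbor_reject :: "puzzle \<Rightarrow> (cell \<Rightarrow> card) \<Rightarrow> cell \<Rightarrow> cell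
     \<Rightarrow> card list \<Rightarrow> nat list \<Rightarrow> card list \<Rightarrow> nat list \<Rightarrow> nat list \<Rightarrow> bool" where
  "neighbor_reject P pl c d S1 \<pi>1 S2 \<pi>2 \<rho> =
    (let m = max (rsize P c) (rsize P d);
         E1 = conv P pl c Ac m S1 \<pi>1;
         E2 = conv P pl d Bc m S2 \<pi>2;
         cols = map (\<lambda>j. [E1 ! j, E2 ! j]) [0..<m];
         sc = permute_cols \<rho> cols;
         i = (LEAST i. i < m \<and> sc ! i ! 0 = Ac 1)
     in sc ! i ! 1 = Bc 1)"

definition nbrs :: "cell \<Rightarrow> cell list" where
  "nbrs c = (let (i, j) = c in
     (if 0 < i then [(i - 1, j)] else []) @ [(i + 1, j)] @
     (if 0 < j then [(i, j - 1)] else []) @ [(i, j + 1)])"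

definition others :: "puzzle \<Rightarrow> cell \<Rightarrow> cell list" where
  "others P b = filter (\<lambda>c. c \<in> white P \<and> c \<noteq> arr P b) (nbrs b)"

definition xset :: "nat \<Rightarrow> nat \<Rightarrow> card" where
  "xset k = [Ac, Bc, Cc, Dc] ! k"

text \<open>Cells involved in the arrow check of b: row 0 is the pointed-to cell
  (converted with set a), rows 1,2,3 are the other adjacent white cells
  (converted with sets b, c, d).\<close>
definition acells :: "puzzle \<Rightarrow> cell \<Rightarrow> cell list" where
  "acells P b = arr P b # others P b"

definition am :: "puzzle \<Rightarrow> cell \<Rightarrow> nat" where
  "am P b = Max (set (map (rsize P) (acells P b)))"

text \<open>Arrow check: S k, \<pi> k are the secret sequence / scramble outcome of the
  conversion of row k, and s the outcome of the pile-shifting shuffle.\<close>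
definition arrow_reject :: "puzzle \<Rightarrow> (cell \<Rightarrow> card) \<Rightarrow> cell
     \<Rightarrow> (nat \<Rightarrow> card list) \<Rightarrow> (nat \<Rightarrow> nat list) \<Rightarrow> nat \<Rightarrow> bool" where
  "arrow_reject P pl b S \<pi> s =
    (let cs = acells P b; m = am P b; len = 2 * m - 1;
         E = map (\<lambda>k. conv P pl (cs ! k) (xset k) len (S k) (\<pi> k)) [0..<length cs];
         cols = map (\<lambda>j. map (\<lambda>e. e ! j) E) [0..<len];
         sc = shift_cols s cols;
         i = (LEAST i. i < len \<and> sc ! i ! 0 = Ac 1)
     in \<exists>l < m. \<exists>card \<in> set (tl (sc ! ((i + l) mod len))).
            card \<in> {Bc 1, Cc 1, Dc 1})"

text \<open>All random outcomes of the shuffles together with the prover's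
  secret sequences (the latter may be chosen adversarially).\<close>
record tape =
  t_room :: "nat \<Rightarrow> nat list"
  t_nS :: "cell \<times> cell \<Rightarrow> nat \<Rightarrow> card list"
  t_npi :: "cell \<times> cell \<Rightarrow> nat \<Rightarrow> nat list"
  t_nrho :: "cell \<times> cell \<Rightarrow> nat list"
  t_aS :: "cell \<Rightarrow> nat \<Rightarrow> card list"
  t_api :: "cell \<Rightarrow> nat \<Rightarrow> nat list"
  t_ashift :: "cell \<Rightarrow> nat"

definition valid_tape :: "puzzle \<Rightarrow> tape \<Rightarrow> bool" where
  "valid_tape P t \<longleftrightarrow>
     (\<forall>r < length (rooms P). is_perm (t_room t r) (length (rooms P ! r)))
   \<and> (\<forall>(c, d) \<in> npairs P. let m = max (rsize P c) (rsize P d) in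
          valid_S Ac m (t_nS t (c, d) 0) \<and> valid_S Bc m (t_nS t (c, d) 1)
        \<and> is_perm (t_npi t (c, d) 0) (rsize P c) \<and> is_perm (t_npi t (c, d) 1) (rsize P d)
        \<and> is_perm (t_nrho t (c, d)) m)
   \<and> (\<forall>b \<in> black P. \<forall>k < length (acells P b).
          valid_S (xset k) (2 * am P b - 1) (t_aS t b k)
        \<and> is_perm (t_api t b k) (rsize P (acells P b ! k)))"

definition accepts :: "puzzle \<Rightarrow> (cell \<Rightarrow> card) \<Rightarrow> tape \<Rightarrow> bool" where
  "accepts P pl t \<longleftrightarrow>
     (\<forall>r < length (rooms P). \<not> room_reject P pl r (t_room t r))
   \<and> (\<forall>(c, d) \<in> npairs P. \<not> neighbor_reject P pl c d
          (t_nS t (c, d) 0) (t_npi t (c, d) 0) (t_nS t (c, d) 1) (t_npi t (c, d) 1)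
          (t_nrho t (c, d)))
   \<and> (\<forall>b \<in> black P. \<not> arrow_reject P pl b (t_aS t b) (t_api t b) (t_ashift t b))"

end

theory Submission
  imports Defs
begin

lemma wfD:
  assumes "wf_puzzle P"
  shows wf_sub: "white P \<subseteq> grid P"
    and wf_room: "\<And>r. r < length (rooms P) \<Longrightarrow> rooms P ! r \<noteq> [] \<and> distinct (rooms P ! r)"
    and wf_disj: "\<And>r s. r < length (rooms P) \<Longrightarrow> s < length (rooms P) \<Longrightarrow> r \<noteq> s \<Longrightarrow>
          set (rooms P ! r) \<inter> set (rooms P ! s) = {}"
    and wf_union: "(\<Union>r < length (rooms P). set (rooms P ! r)) = white P"
    and wf_pre: "\<And>c v. pre P c = Some v \<Longrightarrow> c \<in> white P \<and> 1 \<le> v \<and> v \<le> rsize P c"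
    and wf_arr: "\<And>b. b \<in> black P \<Longrightarrow> arr P b \<in> white P \<and> adj b (arr P b)"
  using assms unfolding wf_puzzle_def by auto

lemma roomidx_eq:
  assumes wf: "wf_puzzle P" and r: "r < length (rooms P)" "c \<in> set (rooms P ! r)"
  shows "roomidx P c = r"
proof -
  have u: "\<And>s. s < length (rooms P) \<and> c \<in> set (rooms P ! s) \<Longrightarrow> s = r"
  proof -
    fix s assume s: "s < length (rooms P) \<and> c \<in> set (rooms P ! s)"
    show "s = r"
    proof (rule ccontr)
      assume "s \<noteq> r"
      from wf_disj[OF wf, of s r] this s r show False by auto
    qed
  qed
  show ?thesis unfolding roomidx_def
    by (rule the_equality) (use r u in blast)+
qed

lemma roomidx_props:
  assumes wf: "wf_puzzle P" and c: "c \<in> white P"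
  shows "roomidx P c < length (rooms P) \<and> c \<in> set (rooms P ! roomidx P c)"
proof -
  from c wf_union[OF wf] obtain r where r: "r < length (rooms P)" "c \<in> set (rooms P ! r)"
    by blast
  with roomidx_eq[OF wf r] show ?thesis by simp
qed

lemma white_room: "wf_puzzle P \<Longrightarrow> r < length (rooms P) \<Longrightarrow> c \<in> set (rooms P ! r) \<Longrightarrow> c \<in> white P"
  using wf_union by blast

lemma pos_props:
  assumes wf: "wf_puzzle P" and c: "c \<in> white P"
  shows "pos P c < rsize P c \<and> rooms P ! roomidx P c ! pos P c = c"
proof -
  let ?cs = "rooms P ! roomidx P c"
  from roomidx_props[OF wf c] have ri: "roomidx P c < length (rooms P)" "c \<in> set ?cs" by auto
  have d: "distinct ?cs" using wf_room[OF wf ri(1)] by blast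
  from ri(2) obtain i where i: "i < length ?cs" "?cs ! i = c" by (auto simp: in_set_conv_nth)
  have u: "\<And>j. j < length ?cs \<and> ?cs ! j = c \<Longrightarrow> j = i"
    by (metis d i nth_eq_iff_index_eq)
  have "pos P c = (THE j. j < length ?cs \<and> ?cs ! j = c)" unfolding pos_def rsize_def ..
  also have "\<dots> = i"
    using i u by (intro the_equality) blast+
  finally have "pos P c = i" .
  then show ?thesis unfolding rsize_def using i by (intro conjI) (erule ssubst, assumption)+
qed

lemma perm_mset:
  assumes "is_perm \<pi> n" shows "mset \<pi> = mset [0..<n]"
proof -
  have d: "distinct \<pi>" and st: "set \<pi> = {..<n}" using assms unfolding is_perm_def by auto
  have "set \<pi> = set [0..<n]" using st by (simp add: lessThan_atLeast0)
  then show ?thesis using d set_eq_iff_mset_eq_distinct distinct_upt by blast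
qed

lemma perm_len: "is_perm \<pi> n \<Longrightarrow> length \<pi> = n"
  using perm_mset[of \<pi> n] mset_eq_length by fastforce

lemma perm_set: "is_perm \<pi> n \<Longrightarrow> set \<pi> = {..<n}"
  unfolding is_perm_def by blast

declare upt_Suc[simp del]

lemma conv_props:
  assumes wf: "wf_puzzle P" and c: "c \<in> white P"
    and ro: "mset (map pl (rooms P ! roomidx P c)) = mset (map (Cell (roomidx P c)) [1..<rsize P c + 1])"
    and pc: "pl c = Cell (roomidx P c) v"
    and pi: "is_perm \<pi> (rsize P c)"
    and X: "inj X"
    and S: "valid_S X m S"
    and mp: "rsize P c \<le> m"
  shows "length (conv P pl c X m S \<pi>) = m \<and> conv P pl c X m S \<pi> ! (v - 1) = X 1
         \<and> (\<forall>j<m. j \<noteq> v - 1 \<longrightarrow> conv P pl c X m S \<pi> ! j \<noteq> X 1)"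
proof -
  define r where "r = roomidx P c"
  define cs where "cs = rooms P ! r"
  define p where "p = length cs"
  define i where "i = pos P c"
  define row3 where "row3 = map (\<lambda>j. if j = i then X 1 else S ! (if j < i then j else j - 1)) [0..<p]"
  define cols where "cols = map (\<lambda>j. [pl (cs ! j), Hc (j + 1), row3 ! j]) [0..<p]"
  define sc where "sc = permute_cols \<pi> cols"
  define rearr where "rearr = map (\<lambda>v. sc ! (LEAST j. j < length sc \<and> sc ! j ! 0 = Cell r v)) [1..<p + 1]"
  define T where "T = map (\<lambda>col. col ! 2) rearr"
  have conv_eq: "conv P pl c X m S \<pi> = T @ drop (p - 1) S"
    unfolding conv_def Let_def T_def rearr_def sc_def cols_def row3_def i_def p_def cs_def r_def
    by (rule refl)
  have rs: "rsize P c = p" by (simp add: rsize_def p_def cs_def r_def)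
  from roomidx_props[OF wf c] have rl: "r < length (rooms P)" and cin: "c \<in> set cs"
    by (auto simp: r_def cs_def)
  from wf_room[OF wf rl] have dcs: "distinct cs" and p1: "1 \<le> p"
    by (auto simp: cs_def p_def Suc_le_eq)
  from pos_props[OF wf c] have ip: "i < p" and csi: "cs ! i = c"
    by (auto simp: i_def rs[symmetric] cs_def r_def)
  have lS: "length S = m - 1"
    using mset_eq_length[OF S[unfolded valid_S_def]] by (simp del: upt_Suc)
  have setS: "set S = X ` {2..<m+1}"
    using S unfolding valid_S_def by (metis mset_eq_setD set_map set_upt)
  have X1S: "X 1 \<notin> set S"
  proof
    assume "X 1 \<in> set S"
    then obtain y where "y \<in> {2..<m+1}" "X 1 = X y" using setS by auto
    with X show False by (auto dest: injD)
  qed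
  have lpi: "length \<pi> = p" using perm_len[OF pi] rs by simp
  have spi: "set \<pi> = {..<p}" using perm_set[OF pi] rs by simp
  have lsc: "length sc = p" by (simp add: sc_def permute_cols_def lpi)
  have sc_nth: "\<And>J. J < p \<Longrightarrow> sc ! J = cols ! (\<pi> ! J)"
    by (simp add: sc_def permute_cols_def lpi)
  have piJ: "\<And>J. J < p \<Longrightarrow> \<pi> ! J < p"
    using spi lpi nth_mem by fastforce
  have cols_nth: "\<And>k. k < p \<Longrightarrow> cols ! k = [pl (cs ! k), Hc (k + 1), row3 ! k]"
    by (simp add: cols_def)
  have ro': "mset (map pl cs) = mset (map (Cell r) [1..<p + 1])"
    using ro by (simp add: rs[symmetric] cs_def r_def)
  have dpl: "distinct (map pl cs)"
    using mset_eq_imp_distinct_iff[OF ro'] by (simp add: distinct_map inj_on_def)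
  have plinj: "\<And>a b. a < p \<Longrightarrow> b < p \<Longrightarrow> pl (cs ! a) = pl (cs ! b) \<Longrightarrow> a = b"
    using dpl by (simp add: nth_eq_iff_index_eq[of "map pl cs", symmetric] p_def)
  have setpl: "set (map pl cs) = Cell r ` {1..<p+1}"
    using mset_eq_setD[OF ro'] by simp
  have key: "\<exists>J<p. T ! (w - 1) = row3 ! (\<pi> ! J) \<and> pl (cs ! (\<pi> ! J)) = Cell r w"
    if w: "1 \<le> w" "w \<le> p" for w
  proof -
    have "Cell r w \<in> set (map pl cs)" using setpl w by auto
    then obtain k where k: "k < p" "pl (cs ! k) = Cell r w"
      by (auto simp: in_set_conv_nth p_def)
    have "k \<in> set \<pi>" using spi k by auto
    then obtain J0 where J0: "J0 < p" "\<pi> ! J0 = k" by (auto simp: in_set_conv_nth lpi)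
    have ex: "\<exists>j. j < length sc \<and> sc ! j ! 0 = Cell r w"
      using J0 k by (intro exI[of _ J0]) (simp add: lsc sc_nth cols_nth)
    define J where "J = (LEAST j. j < length sc \<and> sc ! j ! 0 = Cell r w)"
    have J: "J < p" "sc ! J ! 0 = Cell r w"
      using LeastI_ex[OF ex] unfolding J_def lsc by auto
    have uw: "[Suc 0..<Suc p] ! (w - Suc 0) = w" using w by (subst nth_upt) auto
    have lr: "length rearr = p" by (simp add: rearr_def)
    have "T ! (w - 1) = rearr ! (w - 1) ! 2" using w lr by (simp add: T_def)
    also have "rearr ! (w - 1) = sc ! J" using w uw by (simp add: rearr_def J_def)
    finally have "T ! (w - 1) = row3 ! (\<pi> ! J)"
      using J piJ by (simp add: sc_nth cols_nth)
    moreover have "pl (cs ! (\<pi> ! J)) = Cell r w" using J piJ by (simp add: sc_nth cols_nth)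
    ultimately show ?thesis using J by blast
  qed
  have row3_i: "row3 ! i = X 1" using ip by (simp add: row3_def)
  have row3_o: "row3 ! k \<in> set S" if "k < p" "k \<noteq> i" for k
  proof -
    have "row3 ! k = S ! (if k < i then k else k - 1)" using that by (simp add: row3_def)
    moreover have "(if k < i then k else k - 1) < length S" using that ip lS mp rs by auto
    ultimately show ?thesis by simp
  qed
  have "pl c \<in> set (map pl cs)" using cin by simp
  then have v: "1 \<le> v" "v \<le> p" using setpl pc by (auto simp: r_def)
  have lT: "length T = p" by (simp add: T_def rearr_def)
  have len: "length (conv P pl c X m S \<pi>) = m" using conv_eq lT lS p1 mp rs by simp
  have pci: "pl (cs ! i) = Cell r v" using csi pc by (simp add: r_def)
  have at: "conv P pl c X m S \<pi> ! (v - 1) = X 1"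
  proof -
    obtain J where J: "J < p" "T ! (v - 1) = row3 ! (\<pi> ! J)" "pl (cs ! (\<pi> ! J)) = Cell r v"
      using key[OF v] by blast
    have "\<pi> ! J = i" using plinj[OF piJ[OF J(1)] ip] J(3) pci by simp
    moreover have "v - 1 < p" using v by linarith
    ultimately show ?thesis using conv_eq J(2) row3_i lT by (simp add: nth_append)
  qed
  have oth: "conv P pl c X m S \<pi> ! j \<noteq> X 1" if j: "j < m" "j \<noteq> v - 1" for j
  proof (cases "j < p")
    case True
    obtain J where J: "J < p" "T ! (Suc j - 1) = row3 ! (\<pi> ! J)" "pl (cs ! (\<pi> ! J)) = Cell r (Suc j)"
      using key[of "Suc j"] True by auto
    have "\<pi> ! J \<noteq> i"
    proof
      assume "\<pi> ! J = i"
      then have "Suc j = v" using J(3) pci by simp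
      then show False using j by simp
    qed
    then have "T ! j \<in> set S" using row3_o[OF piJ[OF J(1)]] J(2) by simp
    then show ?thesis using conv_eq True lT X1S by (auto simp: nth_append)
  next
    case False
    have "conv P pl c X m S \<pi> ! j = drop (p - 1) S ! (j - p)"
      using conv_eq False lT by (simp add: nth_append)
    moreover have "j - p < length (drop (p - 1) S)" using False j lS p1 by auto
    ultimately have "conv P pl c X m S \<pi> ! j \<in> set S"
      by (metis in_set_dropD nth_mem)
    then show ?thesis using X1S by auto
  qed
  show ?thesis using len at oth by blast
qed

lemma inj_Ac: "inj Ac" and inj_Bc: "inj Bc" by (auto simp: inj_def)

lemma xset_inj: "k < 4 \<Longrightarrow> inj (xset k)"
proof -
  assume "k < 4"
  then have "k = 0 \<or> k = 1 \<or> k = 2 \<or> k = 3" by auto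
  then show ?thesis by (auto simp: inj_def xset_def)
qed

lemma nb_reject:
  assumes wf: "wf_puzzle P"
    and rok: "\<And>c. c \<in> white P \<Longrightarrow> mset (map pl (rooms P ! roomidx P c)) = mset (map (Cell (roomidx P c)) [1..<rsize P c + 1])"
    and plx: "\<And>c. c \<in> white P \<Longrightarrow> pl c = Cell (roomidx P c) (x c) \<and> 1 \<le> x c \<and> x c \<le> rsize P c"
    and c: "c \<in> white P" and d: "d \<in> white P" and eq: "x c = x d"
    and S1: "valid_S Ac (max (rsize P c) (rsize P d)) S1"
    and S2: "valid_S Bc (max (rsize P c) (rsize P d)) S2"
    and p1: "is_perm \<pi>1 (rsize P c)" and p2: "is_perm \<pi>2 (rsize P d)"
    and rho: "is_perm \<rho> (max (rsize P c) (rsize P d))"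
  shows "neighbor_reject P pl c d S1 \<pi>1 S2 \<pi>2 \<rho>"
proof -
  define m where "m = max (rsize P c) (rsize P d)"
  define E1 where "E1 = conv P pl c Ac m S1 \<pi>1"
  define E2 where "E2 = conv P pl d Bc m S2 \<pi>2"
  define cols where "cols = map (\<lambda>j. [E1 ! j, E2 ! j]) [0..<m]"
  define sc where "sc = permute_cols \<rho> cols"
  define i0 where "i0 = (LEAST i. i < m \<and> sc ! i ! 0 = Ac 1)"
  have red: "neighbor_reject P pl c d S1 \<pi>1 S2 \<pi>2 \<rho> = (sc ! i0 ! 1 = Bc 1)"
    unfolding neighbor_reject_def Let_def i0_def sc_def cols_def E1_def E2_def m_def by (rule refl)
  have C1: "length E1 = m \<and> E1 ! (x c - 1) = Ac 1 \<and> (\<forall>j<m. j \<noteq> x c - 1 \<longrightarrow> E1 ! j \<noteq> Ac 1)"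
    unfolding E1_def
    by (rule conv_props[OF wf c rok[OF c] conjunct1[OF plx[OF c]] p1 inj_Ac]) (use S1 in \<open>auto simp: m_def\<close>)
  have C2: "length E2 = m \<and> E2 ! (x d - 1) = Bc 1"
    unfolding E2_def
    by (rule conjI, (rule conv_props[OF wf d rok[OF d] conjunct1[OF plx[OF d]] p2 inj_Bc, THEN conjunct1]; use S2 in \<open>auto simp: m_def\<close>),
        (rule conv_props[OF wf d rok[OF d] conjunct1[OF plx[OF d]] p2 inj_Bc, THEN conjunct2, THEN conjunct1]; use S2 in \<open>auto simp: m_def\<close>))
  have xc: "1 \<le> x c" "x c - 1 < m" using plx[OF c] by (auto simp: m_def)
  have lr: "length \<rho> = m" using perm_len[OF rho] by (simp add: m_def)
  have sr: "set \<rho> = {..<m}" using perm_set[OF rho] by (simp add: m_def)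
  have rJ: "\<And>J. J < m \<Longrightarrow> \<rho> ! J < m" using sr lr nth_mem by fastforce
  have sc_nth: "\<And>J. J < m \<Longrightarrow> sc ! J = [E1 ! (\<rho> ! J), E2 ! (\<rho> ! J)]"
    using rJ by (simp add: sc_def permute_cols_def lr cols_def)
  have "x c - 1 \<in> set \<rho>" using sr xc by auto
  then obtain J where J: "J < m" "\<rho> ! J = x c - 1" by (auto simp: in_set_conv_nth lr)
  have ex: "\<exists>i. i < m \<and> sc ! i ! 0 = Ac 1"
    using J C1 sc_nth by (intro exI[of _ J]) simp
  have i0: "i0 < m" "sc ! i0 ! 0 = Ac 1" using LeastI_ex[OF ex] unfolding i0_def by auto
  have "\<rho> ! i0 = x c - 1"
  proof (rule ccontr)
    assume "\<rho> ! i0 \<noteq> x c - 1"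
    then have "E1 ! (\<rho> ! i0) \<noteq> Ac 1" using C1 rJ[OF i0(1)] by blast
    then show False using i0 sc_nth by simp
  qed
  then have "sc ! i0 ! 1 = Bc 1" using sc_nth[OF i0(1)] C2 eq by simp
  then show ?thesis using red by simp
qed

lemma adj_nbrs: "adj b c \<Longrightarrow> c \<in> set (nbrs b)"
  by (cases b; cases c) (auto simp: adj_def nbrs_def)

lemma len_nbrs: "length (nbrs b) \<le> 4"
  by (cases b) (auto simp: nbrs_def)

lemma ar_reject:
  assumes wf: "wf_puzzle P"
    and rok: "\<And>c. c \<in> white P \<Longrightarrow> mset (map pl (rooms P ! roomidx P c)) = mset (map (Cell (roomidx P c)) [1..<rsize P c + 1])"
    and plx: "\<And>c. c \<in> white P \<Longrightarrow> pl c = Cell (roomidx P c) (x c) \<and> 1 \<le> x c \<and> x c \<le> rsize P c"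
    and b: "b \<in> black P" and c: "c \<in> white P" and bc: "adj b c" and ca: "c \<noteq> arr P b"
    and le: "x (arr P b) \<le> x c"
    and vS: "\<And>k. k < length (acells P b) \<Longrightarrow> valid_S (xset k) (2 * am P b - 1) (S k)
                 \<and> is_perm (\<pi> k) (rsize P (acells P b ! k))"
  shows "arrow_reject P pl b S \<pi> s"
proof -
  define cs where "cs = acells P b"
  define m where "m = am P b"
  define len where "len = 2 * m - 1"
  define E where "E = map (\<lambda>k. conv P pl (cs ! k) (xset k) len (S k) (\<pi> k)) [0..<length cs]"
  define cols where "cols = map (\<lambda>j. map (\<lambda>e. e ! j) E) [0..<len]"
  define sc where "sc = shift_cols s cols"
  define i0 where "i0 = (LEAST i. i < len \<and> sc ! i ! 0 = Ac 1)"
  have red: "arrow_reject P pl b S \<pi> s = (\<exists>l < m. \<exists>card \<in> set (tl (sc ! ((i0 + l) mod len))).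
            card \<in> {Bc 1, Cc 1, Dc 1})"
    unfolding arrow_reject_def Let_def i0_def sc_def cols_def E_def len_def m_def cs_def by (rule refl)
  define a where "a = arr P b"
  have a: "a \<in> white P" "adj b a" using wf_arr[OF wf b] by (auto simp: a_def)
  have cs0: "cs ! 0 = a" by (simp add: cs_def acells_def a_def)
  have csw: "\<And>k. k < length cs \<Longrightarrow> cs ! k \<in> white P"
  proof -
    fix k assume k: "k < length cs"
    have "set cs \<subseteq> white P" using a by (auto simp: cs_def acells_def others_def a_def)
    then show "cs ! k \<in> white P" using k nth_mem by blast
  qed
  have "c \<in> set (others P b)" using adj_nbrs[OF bc] c ca by (simp add: others_def)
  then obtain k0 where k0: "k0 < length (others P b)" "others P b ! k0 = c"
    by (auto simp: in_set_conv_nth)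
  have "length (others P b) < length (nbrs b)"
    unfolding others_def by (rule length_filter_less[OF adj_nbrs[OF a(2)]]) (simp add: a_def)
  then have lo: "length (others P b) \<le> 3" using len_nbrs[of b] by simp
  define k where "k = Suc k0"
  have k: "1 \<le> k" "k < length cs" "k < 4" "cs ! k = c"
    using k0 lo by (auto simp: k_def cs_def acells_def)
  have lcs: "0 < length cs" by (simp add: cs_def acells_def)
  have mge: "\<And>j. j < length cs \<Longrightarrow> rsize P (cs ! j) \<le> m"
    unfolding m_def am_def cs_def[symmetric] by (intro Max_ge) auto
  have xa: "1 \<le> x a" "x a \<le> rsize P a" using plx[OF a(1)] by auto
  have xc: "1 \<le> x c" "x c \<le> rsize P c" using plx[OF c] by auto
  have m1: "1 \<le> m" using mge[OF lcs] xa cs0 by simp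
  have mc: "x c \<le> m" using mge[OF k(2)] xc k(4) by simp
  have lenm: "m \<le> len" "0 < len" using m1 by (auto simp: len_def)
  have lc4: "length cs \<le> 4" using lo by (simp add: cs_def acells_def)
  have Cprops: "length (E ! j) = len \<and> E ! j ! (x (cs ! j) - 1) = xset j 1
      \<and> (\<forall>i<len. i \<noteq> x (cs ! j) - 1 \<longrightarrow> E ! j ! i \<noteq> xset j 1)" if j: "j < length cs" for j
  proof -
    have w: "cs ! j \<in> white P" using csw[OF j] .
    have vj: "valid_S (xset j) len (S j)" "is_perm (\<pi> j) (rsize P (cs ! j))"
      using vS[of j] j by (auto simp: cs_def len_def m_def)
    have "rsize P (cs ! j) \<le> len" using mge[OF j] lenm by simp
    from conv_props[OF wf w rok[OF w] conjunct1[OF plx[OF w]] vj(2) xset_inj vj(1) this] j lc4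
    show ?thesis by (simp add: E_def)
  qed
  have lcols: "length cols = len" by (simp add: cols_def)
  have lsc: "length sc = len" by (simp add: sc_def shift_cols_def lcols)
  have cols_nth: "\<And>j. j < len \<Longrightarrow> cols ! j = map (\<lambda>e. e ! j) E" by (simp add: cols_def)
  have lE: "length E = length cs" by (simp add: E_def)
  have sc_nth: "\<And>i. i < len \<Longrightarrow> sc ! i = cols ! ((s + i) mod len)"
    by (simp add: sc_def shift_cols_def nth_rotate lcols)
  have A0: "E ! 0 ! (x a - 1) = Ac 1" using Cprops[OF lcs] cs0 by (simp add: xset_def)
  have A0u: "\<And>i. i < len \<Longrightarrow> E ! 0 ! i = Ac 1 \<Longrightarrow> i = x a - 1"
    using Cprops[OF lcs] cs0 by (auto simp: xset_def)
  have xal: "x a - 1 < len" using xa mge[OF lcs] cs0 lenm by simp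
  have "cols ! (x a - 1) \<in> set sc"
    using xal lcols by (simp add: sc_def shift_cols_def)
  then obtain i1 where i1: "i1 < len" "sc ! i1 = cols ! (x a - 1)"
    by (auto simp: in_set_conv_nth lsc)
  have ex: "\<exists>i. i < len \<and> sc ! i ! 0 = Ac 1"
    using i1 cols_nth[OF xal] A0 lE lcs by (intro exI[of _ i1]) simp
  have i0: "i0 < len" "sc ! i0 ! 0 = Ac 1" using LeastI_ex[OF ex] unfolding i0_def by auto
  have modlt: "(s + i0) mod len < len" using lenm by simp
  have "E ! 0 ! ((s + i0) mod len) = Ac 1"
    using i0 sc_nth[OF i0(1)] cols_nth[OF modlt] lE lcs by simp
  then have si0: "(s + i0) mod len = x a - 1" using A0u modlt by blast
  define l where "l = x c - x a"
  have lm: "l < m" using xa xc mc by (simp add: l_def)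
  have "(s + (i0 + l) mod len) mod len = (s + i0 + l) mod len"
    by (simp add: mod_add_right_eq add.assoc)
  also have "\<dots> = ((s + i0) mod len + l) mod len" by (simp add: mod_add_left_eq)
  also have "\<dots> = x c - 1"
  proof -
    have le': "x a \<le> x c" using le by (simp add: a_def)
    have "(s + i0) mod len + l = x c - 1" using si0 xa le' by (simp add: l_def)
    moreover have "x c - 1 < len" using xc mc lenm by simp
    ultimately show ?thesis by simp
  qed
  finally have idx: "(s + (i0 + l) mod len) mod len = x c - 1" .
  have xcl: "x c - 1 < len" using xc mc lenm by simp
  have "sc ! ((i0 + l) mod len) = cols ! (x c - 1)"
    using sc_nth[of "(i0 + l) mod len"] lenm idx by simp
  then have tl_eq: "tl (sc ! ((i0 + l) mod len)) = map (\<lambda>e. e ! (x c - 1)) (tl E)"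
    using cols_nth[OF xcl] by (simp add: map_tl)
  have "E ! k \<in> set (tl E)"
  proof -
    have kl: "k0 < length (tl E)" using k lE by (simp add: k_def)
    have "tl E ! k0 = E ! k" using nth_tl[OF kl] by (simp add: k_def)
    then show ?thesis using nth_mem[OF kl] by simp
  qed
  then have "E ! k ! (x c - 1) \<in> set (tl (sc ! ((i0 + l) mod len)))"
    using tl_eq by auto
  moreover have "E ! k ! (x c - 1) = xset k 1" using Cprops[OF k(2)] k(4) by simp
  moreover have "xset k 1 \<in> {Bc 1, Cc 1, Dc 1}"
  proof -
    have "k = 1 \<or> k = 2 \<or> k = 3" using k by auto
    then show ?thesis by (auto simp: xset_def)
  qed
  ultimately have "\<exists>card \<in> set (tl (sc ! ((i0 + l) mod len))). card \<in> {Bc 1, Cc 1, Dc 1}"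
    by (intro bexI[of _ "E ! k ! (x c - 1)"]) simp_all
  then show ?thesis unfolding red using lm by (intro exI[of _ l]) simp
qed

lemma room_ok:
  assumes wf: "wf_puzzle P" and r: "r < length (rooms P)"
    and nr: "\<not> room_reject P pl r \<pi>" and pi: "is_perm \<pi> (length (rooms P ! r))"
  shows "mset (map pl (rooms P ! r)) = mset (map (Cell r) [1..<length (rooms P ! r) + 1])"
proof -
  define cs where "cs = rooms P ! r"
  define p where "p = length cs"
  define cols where "cols = map (\<lambda>j. [pl (cs ! j), Hc (j + 1)]) [0..<p]"
  have red: "room_reject P pl r \<pi> = (mset (map (\<lambda>col. col ! 0) (permute_cols \<pi> cols)) \<noteq> mset (map (Cell r) [1..<p + 1]))"
    unfolding room_reject_def Let_def cols_def p_def cs_def by (rule refl)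
  have sp: "set \<pi> = {..<p}" using perm_set[OF pi] by (simp add: p_def cs_def)
  have "map (\<lambda>col. col ! 0) (permute_cols \<pi> cols) = map (\<lambda>j. pl (cs ! j)) \<pi>"
    unfolding permute_cols_def map_map
  proof (rule map_cong[OF refl])
    fix j assume "j \<in> set \<pi>"
    then have "j < p" using sp by blast
    then show "((\<lambda>col. col ! 0) \<circ> (!) cols) j = pl (cs ! j)" by (simp add: cols_def)
  qed
  then have "mset (map (\<lambda>col. col ! 0) (permute_cols \<pi> cols)) = image_mset (\<lambda>j. pl (cs ! j)) (mset \<pi>)"
    by simp
  also have "\<dots> = image_mset (\<lambda>j. pl (cs ! j)) (mset [0..<p])"
    using perm_mset[OF pi] by (simp add: p_def cs_def)
  also have "\<dots> = mset (map (\<lambda>j. pl (cs ! j)) [0..<p])" by simp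
  also have "map (\<lambda>j. pl (cs ! j)) [0..<p] = map pl cs"
    unfolding p_def by (rule nth_equalityI) auto
  finally show ?thesis using nr red by (simp add: cs_def p_def)
qed

theorem lemma2:
  fixes P :: puzzle and pl :: "cell \<Rightarrow> card" and t :: tape
  assumes "wf_puzzle P"
    and "placement_ok P pl"
    and "\<not> (\<exists>x. is_solution P x \<and> (\<forall>c \<in> white P. pl c = Cell (roomidx P c) (x c)))"
    and "valid_tape P t"
  shows "\<not> accepts P pl t"
proof
  assume acc: "accepts P pl t"
  note wf = assms(1)
  have racc: "\<And>r. r < length (rooms P) \<Longrightarrow> \<not> room_reject P pl r (t_room t r)"
    using acc unfolding accepts_def by blast
  have nacc: "\<And>c d. (c, d) \<in> npairs P \<Longrightarrow> \<not> neighbor_reject P pl c d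
          (t_nS t (c, d) 0) (t_npi t (c, d) 0) (t_nS t (c, d) 1) (t_npi t (c, d) 1)
          (t_nrho t (c, d))"
    using acc unfolding accepts_def by blast
  have aacc: "\<And>b. b \<in> black P \<Longrightarrow> \<not> arrow_reject P pl b (t_aS t b) (t_api t b) (t_ashift t b)"
    using acc unfolding accepts_def by blast
  have vr: "\<And>r. r < length (rooms P) \<Longrightarrow> is_perm (t_room t r) (length (rooms P ! r))"
    using assms(4) unfolding valid_tape_def by blast
  have vn: "\<And>c d. (c, d) \<in> npairs P \<Longrightarrow>
          valid_S Ac (max (rsize P c) (rsize P d)) (t_nS t (c, d) 0)
        \<and> valid_S Bc (max (rsize P c) (rsize P d)) (t_nS t (c, d) 1)
        \<and> is_perm (t_npi t (c, d) 0) (rsize P c) \<and> is_perm (t_npi t (c, d) 1) (rsize P d)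
        \<and> is_perm (t_nrho t (c, d)) (max (rsize P c) (rsize P d))"
  proof -
    fix c d assume "(c, d) \<in> npairs P"
    with assms(4) have "let m = max (rsize P c) (rsize P d) in
          valid_S Ac m (t_nS t (c, d) 0) \<and> valid_S Bc m (t_nS t (c, d) 1)
        \<and> is_perm (t_npi t (c, d) 0) (rsize P c) \<and> is_perm (t_npi t (c, d) 1) (rsize P d)
        \<and> is_perm (t_nrho t (c, d)) m"
      unfolding valid_tape_def by fast
    then show "?thesis c d" by (simp only: Let_def)
  qed
  have va: "\<And>b k. b \<in> black P \<Longrightarrow> k < length (acells P b) \<Longrightarrow>
          valid_S (xset k) (2 * am P b - 1) (t_aS t b k)
        \<and> is_perm (t_api t b k) (rsize P (acells P b ! k))"
    using assms(4) unfolding valid_tape_def by blast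
  have rok0: "\<And>r. r < length (rooms P) \<Longrightarrow>
      mset (map pl (rooms P ! r)) = mset (map (Cell r) [1..<length (rooms P ! r) + 1])"
    using room_ok[OF wf _ racc vr] by blast
  have rok: "\<And>c. c \<in> white P \<Longrightarrow> mset (map pl (rooms P ! roomidx P c)) = mset (map (Cell (roomidx P c)) [1..<rsize P c + 1])"
    using rok0 roomidx_props[OF wf] unfolding rsize_def by blast
  define x where "x c = (case pl c of Cell _ v \<Rightarrow> v | _ \<Rightarrow> 0)" for c
  have plx: "pl c = Cell (roomidx P c) (x c) \<and> 1 \<le> x c \<and> x c \<le> rsize P c" if c: "c \<in> white P" for c
  proof -
    have "pl c \<in> set (map pl (rooms P ! roomidx P c))" using roomidx_props[OF wf c] by simp
    also have "\<dots> = set (map (Cell (roomidx P c)) [1..<rsize P c + 1])"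
      using mset_eq_setD[OF rok[OF c]] .
    finally obtain w where "pl c = Cell (roomidx P c) w" "1 \<le> w" "w \<le> rsize P c" by auto
    then show ?thesis by (simp add: x_def)
  qed
  have sol: "is_solution P x"
    unfolding is_solution_def
  proof (intro conjI allI impI ballI)
    fix c v assume pv: "pre P c = Some v"
    then have cw: "c \<in> white P" using wf_pre[OF wf] by blast
    have "pl c = Cell (roomidx P c) v" using assms(2) pv unfolding placement_ok_def by blast
    then show "x c = v" using plx[OF cw] by simp
  next
    fix r assume r: "r < length (rooms P)"
    let ?cs = "rooms P ! r"
    have "Cell r ` (x ` set ?cs) = pl ` set ?cs"
    proof -
      have "\<And>c. c \<in> set ?cs \<Longrightarrow> pl c = Cell r (x c)"
        using plx white_room[OF wf r] roomidx_eq[OF wf r] by metis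
      then show ?thesis by (auto simp: image_image)
    qed
    also have "\<dots> = set (map (Cell r) [1..<length ?cs + 1])"
      using mset_eq_setD[OF rok0[OF r]] by simp
    also have "\<dots> = Cell r ` {1..length ?cs}" by auto
    finally show "x ` set ?cs = {1..length ?cs}"
      by (rule inj_image_eq_iff[THEN iffD1, rotated]) (simp add: inj_def)
  next
    fix c d assume cd: "c \<in> white P" "d \<in> white P"
      and h: "adj c d \<and> roomidx P c \<noteq> roomidx P d"
    show "x c \<noteq> x d"
    proof
      assume eq: "x c = x d"
      have "(c, d) \<in> npairs P \<or> (d, c) \<in> npairs P"
        using h cd unfolding adj_def npairs_def by auto
      then show False
      proof
        assume n: "(c, d) \<in> npairs P"
        have "neighbor_reject P pl c d
          (t_nS t (c, d) 0) (t_npi t (c, d) 0) (t_nS t (c, d) 1) (t_npi t (c, d) 1)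
          (t_nrho t (c, d))"
          using vn[OF n] by (intro nb_reject[OF wf rok plx cd eq]) auto
        then show False using nacc[OF n] by blast
      next
        assume n: "(d, c) \<in> npairs P"
        have "neighbor_reject P pl d c
          (t_nS t (d, c) 0) (t_npi t (d, c) 0) (t_nS t (d, c) 1) (t_npi t (d, c) 1)
          (t_nrho t (d, c))"
          using vn[OF n] eq by (intro nb_reject[OF wf rok plx cd(2) cd(1)]) auto
        then show False using nacc[OF n] by blast
      qed
    qed
  next
    fix b c assume b: "b \<in> black P" and c: "c \<in> white P" and h: "adj b c \<and> c \<noteq> arr P b"
    show "x c < x (arr P b)"
    proof (rule ccontr)
      assume "\<not> x c < x (arr P b)"
      then have le: "x (arr P b) \<le> x c" by simp
      have "arrow_reject P pl b (t_aS t b) (t_api t b) (t_ashift t b)"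
        using h va[OF b] by (intro ar_reject[OF wf rok plx b c _ _ le]) auto
      then show False using aacc[OF b] by blast
    qed
  qed
  moreover have "\<forall>c \<in> white P. pl c = Cell (roomidx P c) (x c)" using plx by blast
  ultimately show False using assms(3) by blast
qed

end
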